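(* Let $0<p<2$, let $G=(V,E)$ be a graph with $V=\{1,\dots,n\}$, and let $c$ be a real number. Consider the optimization problem $\tilde{F}_{BS}^{p}$ in the variables of a symmetric matrix $Z=[z_{ij}]_{i,j=1}^n$: $$\min \ \frac{1}{2^{p/2}}\sum_{\{i,j\}\in E} z_{ij}^{p/2}$$ subject to $$z_{ij}^{p/2}+z_{jk}^{p/2}\ge z_{ik}^{p/2}\quad \forall i,j,k,\qquad \sum_{i<j} z_{ij}\ge c(1-c)n^2,\qquad z_{ii}=0\ \ \forall i,\qquad \mathbf{1}-Z\succeq 0,$$ where $\mathbf{1}$ is the $n\times n$ matrix with all entries equal to $1$. Then $\tilde{F}_{BS}^{p}$ is a concave program: its objective function is concave and its feasible set is convex.
   Context: A concave program is an optimization problem of the form $\min_{x\in C} f(x)$ where $C\subseteq\mathbb{R}^d$ is a convex set and $f$ is a concave function (i.e. $f(\lambda x+(1-\lambda)y)\ge \lambda f(x)+(1-\lambda)f(y)$ for all $x,y$ in its convex domain and $\lambda\in[0,1]$). The variables $z_{ij}$ are understood to be nonnegative reals, so that $z^{p/2}$ is defined; $M\succeq 0$ means $M$ is positive semidefinite. *)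

theory Defs
  imports "HOL-Analysis.Analysis"
begin

text \<open>Vertices are the elements of a finite linearly ordered type 'n (playing the role of
  {1,...,n}, with n = CARD('n)); n x n real matrices are elements of real^'n^'n.\<close>

definition psd :: "real^'n^'n \<Rightarrow> bool" where
  "psd M \<longleftrightarrow> transpose M = M \<and> (\<forall>x::real^'n. 0 \<le> x \<bullet> (M *v x))"

definition ones_mat :: "real^'n^'n" where
  "ones_mat = (\<chi> i j. 1)"

definition sym_nonneg :: "(real^'n^'n) set" where
  "sym_nonneg = {Z. (\<forall>i j. 0 \<le> Z $ i $ j \<and> Z $ i $ j = Z $ j $ i)}"

definition FBS_obj :: "real \<Rightarrow> ('n::{finite,linorder}) set set \<Rightarrow> real^('n::{finite,linorder})^('n::{finite,linorder}) \<Rightarrow> real" where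
  "FBS_obj p E Z = (1 / 2 powr (p/2)) *
      (\<Sum>(i,j)\<in>{(i,j). i < j \<and> {i,j} \<in> E}. (Z $ i $ j) powr (p/2))"

definition FBS_feasible :: "real \<Rightarrow> real \<Rightarrow> (real^('n::{finite,linorder})^('n::{finite,linorder})) set" where
  "FBS_feasible p c = {Z \<in> sym_nonneg.
      (\<forall>i j k. (Z $ i $ j) powr (p/2) + (Z $ j $ k) powr (p/2) \<ge> (Z $ i $ k) powr (p/2))
    \<and> (\<Sum>(i,j)\<in>{(i,j). i < j}. Z $ i $ j) \<ge> c * (1 - c) * (real CARD('n))^2
    \<and> (\<forall>i. Z $ i $ i = 0)
    \<and> psd (ones_mat - Z)}"

end

theory Submission imports Defs begin
lemma powr_concave_pos:
  assumes "0 \<le> q" "q \<le> 1" shows "concave_on {0<..} (\<lambda>x::real. x powr q)"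
proof (rule f''_le0_imp_concave[where f'="\<lambda>x. q * x powr (q-1)" and f''="\<lambda>x. q*(q-1) * x powr (q-2)"])
  show "convex {0::real<..}" by simp
  fix x :: real assume "x \<in> {0<..}"
  then have x: "x > 0" by simp
  show "DERIV (\<lambda>x. x powr q) x :> q * x powr (q-1)"
    using x by (auto intro!: derivative_eq_intros)
  show "DERIV (\<lambda>x. q * x powr (q-1)) x :> q*(q-1) * x powr (q-2)"
    using x by (auto intro!: derivative_eq_intros simp: algebra_simps)
  show "q*(q-1) * x powr (q-2) \<le> 0"
    using assms x by (simp add: mult_nonneg_nonpos mult_nonpos_nonneg)
qed

lemma powr_conc:
  fixes x y s t q :: real
  assumes "0 \<le> q" "q \<le> 1" "0 \<le> x" "0 \<le> y" "0 \<le> s" "0 \<le> t" "s + t = 1"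
  shows "s * x powr q + t * y powr q \<le> (s*x + t*y) powr q"
proof -
  have key: "t * y powr q \<le> (t*y) powr q" if "0 \<le> t" "t \<le> 1" "0 \<le> y" for t y :: real
  proof -
    have "t = t powr 1" using that by (cases "t = 0") auto
    also have "\<dots> \<le> t powr q" using that assms powr_mono'[of q 1 t] by (cases "t=0") auto
    finally have "t * y powr q \<le> t powr q * y powr q" using that by (intro mult_right_mono) auto
    then show ?thesis using that by (simp add: powr_mult)
  qed
  show ?thesis
  proof (cases "x = 0 \<or> y = 0")
    case True
    then show ?thesis using key[of t y] key[of s x] assms by (cases "x = 0") (auto simp: powr_0)
  next
    case False
    then have "x > 0" "y > 0" using assms by auto
    then have "(1-t) * x powr q + t * y powr q \<le> ((1-t)*x + t*y) powr q"
      using concave_onD[OF powr_concave_pos[OF assms(1,2)], of t x y] assms by auto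
    moreover have "s = 1 - t" using assms by simp
    ultimately show ?thesis by simp
  qed
qed

lemma tri_zero:
  fixes q a1 b1 c1 a2 b2 c2 s t :: real
  assumes q: "0 \<le> q" and nn: "0 \<le> a1" "0 \<le> b1" "0 \<le> a2" "0 \<le> b2" "0 \<le> c2" "0 \<le> s" "0 \<le> t"
    and h2: "c2 powr q \<le> a2 powr q + b2 powr q"
  shows "(t*c2) powr q \<le> (s*a1 + t*a2) powr q + (s*b1 + t*b2) powr q"
proof -
  have "(t*c2) powr q = t powr q * c2 powr q" using nn by (simp add: powr_mult)
  also have "\<dots> \<le> t powr q * (a2 powr q + b2 powr q)" using h2 by (simp add: mult_left_mono)
  also have "\<dots> = (t*a2) powr q + (t*b2) powr q" using nn by (simp add: powr_mult algebra_simps)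
  also have "\<dots> \<le> (s*a1 + t*a2) powr q + (s*b1 + t*b2) powr q"
    using nn q by (intro add_mono powr_mono2) auto
  finally show ?thesis .
qed

lemma tri_conv:
  fixes q a1 b1 c1 a2 b2 c2 s t :: real
  assumes q: "0 \<le> q" "q \<le> 1" and nn: "0 \<le> a1" "0 \<le> b1" "0 \<le> c1" "0 \<le> a2" "0 \<le> b2" "0 \<le> c2"
    and st: "0 \<le> s" "0 \<le> t" "s + t = 1"
    and h1: "c1 powr q \<le> a1 powr q + b1 powr q"
    and h2: "c2 powr q \<le> a2 powr q + b2 powr q"
  shows "(s*c1 + t*c2) powr q \<le> (s*a1 + t*a2) powr q + (s*b1 + t*b2) powr q"
proof (cases "s*c1 = 0 \<or> t*c2 = 0")
  case True
  then show ?thesis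
  proof
    assume "s*c1 = 0" then have e: "s*c1 + t*c2 = t*c2" by simp
    show ?thesis unfolding e by (rule tri_zero[OF q(1) nn(1,2,4,5,6) st(1,2) h2])
  next
    assume "t*c2 = 0" then have e: "s*c1 + t*c2 = s*c1" by simp
    have e2: "s*a1 + t*a2 = t*a2 + s*a1" "s*b1 + t*b2 = t*b2 + s*b1" by simp_all
    show ?thesis unfolding e e2 by (rule tri_zero[OF q(1) nn(4,5,1,2,3) st(2,1) h1])
  qed
next
  case False
  then have c1: "c1 > 0" and c2: "c2 > 0" and s: "s > 0" and t: "t > 0" using nn st by auto
  define C where "C = s*c1 + t*c2"
  have C: "C > 0" using c1 c2 s t by (simp add: C_def add_pos_pos)
  define l where "l = s*c1/C"
  have l1: "1 - l = t*c2/C" using C by (simp add: l_def C_def field_simps)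
  have l0: "0 \<le> l" "0 \<le> 1 - l" using l1 C s t c1 c2 by (auto simp: l_def)
  have eA: "(s*a1 + t*a2)/C = l * (a1/c1) + (1-l) * (a2/c2)" for a1 a2
    using c1 c2 C unfolding l1 by (simp add: l_def field_simps)
  have u1: "1 \<le> (a1/c1) powr q + (b1/c1) powr q"
  proof -
    have "(a1/c1) powr q + (b1/c1) powr q = (a1 powr q + b1 powr q) / c1 powr q"
      using nn c1 by (simp add: powr_divide add_divide_distrib)
    also have "\<dots> \<ge> 1" using h1 c1 by simp
    finally show ?thesis .
  qed
  have u2: "1 \<le> (a2/c2) powr q + (b2/c2) powr q"
  proof -
    have "(a2/c2) powr q + (b2/c2) powr q = (a2 powr q + b2 powr q) / c2 powr q"
      using nn c2 by (simp add: powr_divide add_divide_distrib)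
    also have "\<dots> \<ge> 1" using h2 c2 by simp
    finally show ?thesis .
  qed
  have pA: "l * (a1/c1) powr q + (1-l) * (a2/c2) powr q \<le> ((s*a1 + t*a2)/C) powr q"
    unfolding eA using powr_conc[OF q, of "a1/c1" "a2/c2" l "1-l"] nn c1 c2 l0 by auto
  have pB: "l * (b1/c1) powr q + (1-l) * (b2/c2) powr q \<le> ((s*b1 + t*b2)/C) powr q"
    unfolding eA using powr_conc[OF q, of "b1/c1" "b2/c2" l "1-l"] nn c1 c2 l0 by auto
  have "1 \<le> l * ((a1/c1) powr q + (b1/c1) powr q) + (1-l) * ((a2/c2) powr q + (b2/c2) powr q)"
  proof -
    have "l * 1 + (1-l) * 1 \<le> l * ((a1/c1) powr q + (b1/c1) powr q) + (1-l) * ((a2/c2) powr q + (b2/c2) powr q)"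
      using u1 u2 l0 by (intro add_mono mult_left_mono) auto
    then show ?thesis by simp
  qed
  also have "\<dots> \<le> ((s*a1 + t*a2)/C) powr q + ((s*b1 + t*b2)/C) powr q"
    using pA pB by (simp add: algebra_simps)
  also have "\<dots> = (s*a1 + t*a2) powr q / C powr q + (s*b1 + t*b2) powr q / C powr q"
  proof -
    have na: "0 \<le> s*a1 + t*a2" and nb: "0 \<le> s*b1 + t*b2" and Cn: "0 \<le> C" using nn st C by auto
    show ?thesis by (simp only: powr_divide)
  qed
  finally have "C powr q \<le> (s*a1 + t*a2) powr q + (s*b1 + t*b2) powr q"
    using C by (simp add: field_simps)
  then show ?thesis by (simp add: C_def)
qed
lemma scaleR_mat_vec: "((c::real) *\<^sub>R (A::real^'n^'m)) *v x = c *\<^sub>R (A *v x)"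
  by (vector matrix_vector_mult_def sum_distrib_left algebra_simps)

lemma transpose_comb: "transpose ((u::real) *\<^sub>R (A::real^'n^'n) + v *\<^sub>R B) = u *\<^sub>R transpose A + v *\<^sub>R transpose B"
  by (vector transpose_def)

lemma psd_comb:
  assumes "psd A" "psd B" "0 \<le> u" "0 \<le> v"
  shows "psd (u *\<^sub>R A + v *\<^sub>R B)"
  unfolding psd_def
proof
  show "transpose (u *\<^sub>R A + v *\<^sub>R B) = u *\<^sub>R A + v *\<^sub>R B"
    using assms by (simp add: transpose_comb psd_def)
  show "\<forall>x. 0 \<le> x \<bullet> ((u *\<^sub>R A + v *\<^sub>R B) *v x)"
  proof
    fix x :: "real^'a"
    have "x \<bullet> ((u *\<^sub>R A + v *\<^sub>R B) *v x) = u * (x \<bullet> (A *v x)) + v * (x \<bullet> (B *v x))"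
      by (simp add: matrix_vector_mult_add_rdistrib scaleR_mat_vec inner_add_right)
    also have "\<dots> \<ge> 0" using assms unfolding psd_def by auto
    finally show "0 \<le> x \<bullet> ((u *\<^sub>R A + v *\<^sub>R B) *v x)" .
  qed
qed

lemma convex_sym_nonneg: "convex (sym_nonneg :: (real^'n^'n) set)"
  unfolding convex_def sym_nonneg_def by auto

lemma ones_comb: "(u::real) + v = 1 \<Longrightarrow> ones_mat - (u *\<^sub>R Z1 + v *\<^sub>R Z2) = u *\<^sub>R (ones_mat - Z1) + v *\<^sub>R (ones_mat - (Z2::real^'n^'n))"
  by (vector ones_mat_def algebra_simps)

theorem mainTheorem1:
  fixes p c :: real and E :: "'n::{finite,linorder} set set"
  assumes "0 < p" "p < 2"
    and "\<forall>e\<in>E. \<exists>i j. i \<noteq> j \<and> e = {i, j}"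
  shows "convex (sym_nonneg :: (real^('n::{finite,linorder})^('n::{finite,linorder})) set)
     \<and> concave_on sym_nonneg (FBS_obj p E)
     \<and> convex (FBS_feasible p c :: (real^('n::{finite,linorder})^('n::{finite,linorder})) set)"
proof (intro conjI)
  have q: "0 \<le> p/2" "p/2 \<le> 1" using assms by auto
  show "convex (sym_nonneg :: (real^('n::{finite,linorder})^('n::{finite,linorder})) set)" by (rule convex_sym_nonneg)
  show "concave_on sym_nonneg (FBS_obj p E)"
    unfolding concave_on_iff
  proof (intro conjI ballI allI impI)
    show "convex (sym_nonneg :: (real^('n::{finite,linorder})^('n::{finite,linorder})) set)" by (rule convex_sym_nonneg)
    fix Z1 Z2 :: "real^('n::{finite,linorder})^('n::{finite,linorder})" and u v :: real
    assume Z: "Z1 \<in> sym_nonneg" "Z2 \<in> sym_nonneg" and uv: "0 \<le> u" "0 \<le> v" "u + v = 1"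
    define P where "P = {(i::'n::{finite,linorder},j). i < j \<and> {i,j} \<in> E}"
    define K where "K = 1 / 2 powr (p/2)"
    have K: "K \<ge> 0" by (simp add: K_def)
    have "u * (\<Sum>x\<in>P. (Z1 $ fst x $ snd x) powr (p/2)) + v * (\<Sum>x\<in>P. (Z2 $ fst x $ snd x) powr (p/2))
        = (\<Sum>x\<in>P. u * (Z1 $ fst x $ snd x) powr (p/2) + v * (Z2 $ fst x $ snd x) powr (p/2))"
      by (simp add: sum_distrib_left sum.distrib)
    also have "\<dots> \<le> (\<Sum>x\<in>P. ((u *\<^sub>R Z1 + v *\<^sub>R Z2) $ fst x $ snd x) powr (p/2))"
      using Z uv by (intro sum_mono) (auto simp: sym_nonneg_def intro!: powr_conc[OF q])
    finally have L: "u * (\<Sum>x\<in>P. (Z1 $ fst x $ snd x) powr (p/2)) + v * (\<Sum>x\<in>P. (Z2 $ fst x $ snd x) powr (p/2))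
       \<le> (\<Sum>x\<in>P. ((u *\<^sub>R Z1 + v *\<^sub>R Z2) $ fst x $ snd x) powr (p/2))" .
    have "K * (u * (\<Sum>x\<in>P. (Z1 $ fst x $ snd x) powr (p/2)) + v * (\<Sum>x\<in>P. (Z2 $ fst x $ snd x) powr (p/2)))
       \<le> K * (\<Sum>x\<in>P. ((u *\<^sub>R Z1 + v *\<^sub>R Z2) $ fst x $ snd x) powr (p/2))"
      using mult_left_mono[OF L K] .
    then have "u * (K * (\<Sum>x\<in>P. (Z1 $ fst x $ snd x) powr (p/2))) + v * (K * (\<Sum>x\<in>P. (Z2 $ fst x $ snd x) powr (p/2)))
       \<le> K * (\<Sum>x\<in>P. ((u *\<^sub>R Z1 + v *\<^sub>R Z2) $ fst x $ snd x) powr (p/2))"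
      by (simp add: algebra_simps)
    then show "u * FBS_obj p E Z1 + v * FBS_obj p E Z2 \<le> FBS_obj p E (u *\<^sub>R Z1 + v *\<^sub>R Z2)"
      unfolding FBS_obj_def P_def[symmetric] K_def[symmetric] by (simp add: split_def)
  qed
  show "convex (FBS_feasible p c :: (real^('n::{finite,linorder})^('n::{finite,linorder})) set)"
    unfolding convex_def
  proof (intro ballI allI impI)
    fix Z1 Z2 :: "real^('n::{finite,linorder})^('n::{finite,linorder})" and u v :: real
    assume Z: "Z1 \<in> FBS_feasible p c" "Z2 \<in> FBS_feasible p c" and uv: "0 \<le> u" "0 \<le> v" "u + v = 1"
    let ?Z = "u *\<^sub>R Z1 + v *\<^sub>R Z2"
    have s1: "Z1 \<in> sym_nonneg" "Z2 \<in> sym_nonneg" using Z by (auto simp: FBS_feasible_def)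
    have sym: "?Z \<in> sym_nonneg" using convexD[OF convex_sym_nonneg s1 uv] .
    have tri: "(?Z $ i $ j) powr (p/2) + (?Z $ j $ k) powr (p/2) \<ge> (?Z $ i $ k) powr (p/2)" for i j k
    proof -
      have h1: "(Z1 $ i $ k) powr (p/2) \<le> (Z1 $ i $ j) powr (p/2) + (Z1 $ j $ k) powr (p/2)"
        and h2: "(Z2 $ i $ k) powr (p/2) \<le> (Z2 $ i $ j) powr (p/2) + (Z2 $ j $ k) powr (p/2)"
        using Z by (auto simp: FBS_feasible_def)
      show ?thesis using tri_conv[OF q _ _ _ _ _ _ uv h1 h2] s1 by (simp add: sym_nonneg_def)
    qed
    have sum: "(\<Sum>(i,j)\<in>{(i::'n::{finite,linorder},j). i < j}. ?Z $ i $ j) \<ge> c * (1 - c) * (real CARD('n::{finite,linorder}))^2"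
    proof -
      let ?B = "c * (1 - c) * (real CARD('n::{finite,linorder}))^2"
      have b1: "(\<Sum>x\<in>{(i::'n::{finite,linorder},j). i < j}. Z1 $ fst x $ snd x) \<ge> ?B"
        and b2: "(\<Sum>x\<in>{(i::'n::{finite,linorder},j). i < j}. Z2 $ fst x $ snd x) \<ge> ?B"
        using Z by (auto simp: FBS_feasible_def split_def)
      have "(\<Sum>x\<in>{(i::'n::{finite,linorder},j). i < j}. ?Z $ fst x $ snd x) = u * (\<Sum>x\<in>{(i::'n::{finite,linorder},j). i < j}. Z1 $ fst x $ snd x) + v * (\<Sum>x\<in>{(i::'n::{finite,linorder},j). i < j}. Z2 $ fst x $ snd x)"
        by (simp add: sum_distrib_left sum.distrib)
      also have "\<dots> \<ge> u * ?B + v * ?B" using b1 b2 uv by (intro add_mono mult_left_mono) auto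
      also have "u * ?B + v * ?B = ?B" using uv by (metis distrib_right mult_1)
      finally show ?thesis by (simp add: split_def)
    qed
    have diag: "\<forall>i. ?Z $ i $ i = 0" using Z by (auto simp: FBS_feasible_def)
    have "psd (ones_mat - ?Z)"
      unfolding ones_comb[OF uv(3)] using Z uv by (intro psd_comb) (auto simp: FBS_feasible_def)
    then show "?Z \<in> FBS_feasible p c"
      using sym tri sum diag unfolding FBS_feasible_def by blast
  qed
qed
end
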